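(* Fix any input (any fixed initial content of the tape). The set of programs whose computation on this input falls off the tape before reaching the halt state and before repeating a state has asymptotic probability one.
   Context: Model of computation: a single head reads and writes symbols $0,1$ on a one-way infinite tape with cells indexed $0,1,2,\dots$; the head starts on cell $0$. An $n$-state program has states $Q=\{q_1,\dots,q_n\}$, with $q_1$ the start state, plus a separate halt state not in $Q$. A program is a function $p: Q\times\{0,1\}\to (Q\cup\{\mathrm{halt}\})\times\{0,1\}\times\{L,R\}$; $p(q,i)=\langle r,j,d\rangle$ means: in state $q$ reading $i$, write $j$, move one cell in direction $d$, enter state $r$. The computation stops when the halt state is reached ("halting") or when the head attempts to move left from cell $0$ ("falls off the tape"); in the latter case the target state of that transition is not regarded as reached. The computation "repeats a state" if some state occurs twice in the sequence of states $q_1=s_0,s_1,\dots$ reached at successive steps. Let $P_n$ be the set of all $n$-state programs; the asymptotic probability of a set $B$ of programs is $\mu(B)=\lim_{n\to\infty}|B\cap P_n|/|P_n|$, when this limit exists. *)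

theory Defs
  imports Complex_Main "HOL-Library.FuncSet"
begin

(* Tape symbols 0,1 are encoded as False,True.
   States q_1,...,q_n are encoded as 0,...,n-1 (q_1 = 0 is the start state);
   a transition target is "Some r" for state r, or "None" for the halt state. *)

datatype dir = L | R

type_synonym program = "nat \<times> bool \<Rightarrow> nat option \<times> bool \<times> dir"

(* configuration: (current state, tape content, head position) *)
type_synonym config = "nat \<times> (nat \<Rightarrow> bool) \<times> nat"

definition programs :: "nat \<Rightarrow> program set" where
  "programs n = ({0..<n} \<times> (UNIV :: bool set)) \<rightarrow>\<^sub>E
                  ((insert None (Some ` {0..<n})) \<times> (UNIV :: bool set) \<times> (UNIV :: dir set))"

fun trans_of :: "program \<Rightarrow> config \<Rightarrow> nat option \<times> bool \<times> dir" where
  "trans_of p (q, t, h) = p (q, t h)"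

fun falls_off :: "program \<Rightarrow> config \<Rightarrow> bool" where
  "falls_off p (q, t, h) = (h = 0 \<and> snd (snd (p (q, t h))) = L)"

fun step :: "program \<Rightarrow> config \<Rightarrow> config" where
  "step p (q, t, h) =
     (case p (q, t h) of (r, j, d) \<Rightarrow>
        (the r, t(h := j), (if d = R then Suc h else h - 1)))"

definition conf :: "program \<Rightarrow> (nat \<Rightarrow> bool) \<Rightarrow> nat \<Rightarrow> config" where
  "conf p x i = (step p ^^ i) (0, x, 0)"

definition falls_off_before_halt_or_repeat :: "program \<Rightarrow> (nat \<Rightarrow> bool) \<Rightarrow> bool" where
  "falls_off_before_halt_or_repeat p x \<longleftrightarrow>
     (\<exists>k. (\<forall>i<k. \<not> falls_off p (conf p x i) \<and> fst (trans_of p (conf p x i)) \<noteq> None)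
        \<and> falls_off p (conf p x k)
        \<and> inj_on (\<lambda>i. fst (conf p x i)) {..k})"

end

theory Submission
  imports Defs
begin

lemma card_split:
  assumes "finite A" "k \<notin> A" "finite B"
  shows "card {f \<in> Pi\<^sub>E (insert k A) (\<lambda>_. B). P f}
       = (\<Sum>b\<in>B. card {g \<in> Pi\<^sub>E A (\<lambda>_. B). P (g(k:=b))})"
proof -
  have eq: "{f \<in> Pi\<^sub>E (insert k A) (\<lambda>_. B). P f}
      = (\<lambda>(y, g). g(k := y)) ` (SIGMA b:B. {g \<in> Pi\<^sub>E A (\<lambda>_. B). P (g(k:=b))})"
    unfolding PiE_insert_eq by auto
  have inj: "inj_on (\<lambda>(y, g). g(k := y)) (SIGMA b:B. {g \<in> Pi\<^sub>E A (\<lambda>_. B). P (g(k:=b))})"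
    by (rule inj_on_subset[OF inj_combinator[OF assms(2), of "\<lambda>_. B"]]) auto
  have fin: "\<And>b. finite {g \<in> Pi\<^sub>E A (\<lambda>_. B). P (g(k:=b))}"
    using assms by (intro finite_subset[OF _ finite_PiE[OF assms(1)]]) auto
  show ?thesis unfolding eq card_image[OF inj]
    using assms fin by (subst card_SigmaI) auto
qed

lemma card_indep:
  assumes "finite A" "k \<notin> A" "finite B" "\<And>f b. P (f(k:=b)) = P f"
  shows "card {f \<in> Pi\<^sub>E (insert k A) (\<lambda>_. B). P f}
       = card B * card {g \<in> Pi\<^sub>E A (\<lambda>_. B). P g}"
proof -
  have "\<And>b. {g \<in> Pi\<^sub>E A (\<lambda>_. B). P (g(k:=b))} = {g \<in> Pi\<^sub>E A (\<lambda>_. B). P g}"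
    using assms(4) by auto
  then show ?thesis using card_split[OF assms(1-3), of P] by simp
qed

fun good :: "program \<Rightarrow> nat \<Rightarrow> nat set \<Rightarrow> config \<Rightarrow> bool" where
  "good p 0 V c = False"
| "good p (Suc m) V (q,t,h) = (falls_off p (q,t,h) \<or>
     (fst (p (q, t h)) \<noteq> None \<and> the (fst (p (q, t h))) \<notin> insert q V
      \<and> good p m (insert q V) (step p (q,t,h))))"

lemma good_dep:
  "q \<notin> V \<Longrightarrow> (\<And>s b. s \<notin> V \<Longrightarrow> p (s,b) = p' (s,b)) \<Longrightarrow>
   good p m V (q,t,h) = good p' m V (q,t,h)"
proof (induction m arbitrary: V q t h)
  case 0 then show ?case by simp
next
  case (Suc m)
  have e: "p (q, t h) = p' (q, t h)" using Suc.prems by auto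
  obtain r j d where rjd: "p (q, t h) = (r,j,d)" by (cases "p (q, t h)") auto
  have rjd': "p' (q, t h) = (r,j,d)" using e rjd by simp
  show ?case
  proof (cases "r \<noteq> None \<and> the r \<notin> insert q V")
    case True
    have "good p m (insert q V) (the r, t(h:=j), (if d = R then Suc h else h - 1))
        = good p' m (insert q V) (the r, t(h:=j), (if d = R then Suc h else h - 1))"
      using True Suc.prems by (intro Suc.IH) auto
    then show ?thesis by (simp only: good.simps falls_off.simps step.simps rjd rjd' prod.case fst_conv snd_conv)
  next
    case False
    then show ?thesis by (simp only: good.simps falls_off.simps step.simps rjd rjd' prod.case fst_conv snd_conv) auto
  qed
qed

lemma good_imp:
  "good p m V (conf p x i) \<Longrightarrow> (\<forall>j<i. \<not> falls_off p (conf p x j) \<and> fst (trans_of p (conf p x j)) \<noteq> None)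
   \<Longrightarrow> inj_on (\<lambda>j. fst (conf p x j)) {..i} \<Longrightarrow> V = (\<lambda>j. fst (conf p x j)) ` {..<i}
   \<Longrightarrow> falls_off_before_halt_or_repeat p x"
proof (induction m arbitrary: V i)
  case 0
  then show ?case by (cases "conf p x i") auto
next
  case (Suc m)
  obtain q t h where c: "conf p x i = (q,t,h)" by (cases "conf p x i") auto
  show ?case
  proof (cases "falls_off p (q,t,h)")
    case True
    then show ?thesis unfolding falls_off_before_halt_or_repeat_def using Suc.prems c by metis
  next
    case False
    have cs: "conf p x (Suc i) = step p (q,t,h)" using c by (simp add: conf_def)
    have g: "fst (p (q, t h)) \<noteq> None" "the (fst (p (q, t h))) \<notin> insert q V"
        "good p m (insert q V) (conf p x (Suc i))"
      using Suc.prems(1) False c cs by auto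
    have fs: "fst (conf p x (Suc i)) = the (fst (p (q, t h)))"
      unfolding cs by (cases "p (q, t h)") auto
    have img: "insert q V = (\<lambda>j. fst (conf p x j)) ` {..<Suc i}"
      using Suc.prems(4) c by (auto simp: lessThan_Suc)
    show ?thesis
    proof (rule Suc.IH[OF g(3)])
      show "\<forall>j<Suc i. \<not> falls_off p (conf p x j) \<and> fst (trans_of p (conf p x j)) \<noteq> None"
        using Suc.prems(2) False c g(1) less_Suc_eq by auto
      show "inj_on (\<lambda>j. fst (conf p x j)) {..Suc i}"
        using Suc.prems(3) g(2) fs img by (auto simp: atMost_Suc lessThan_Suc_atMost[symmetric] lessThan_Suc)
      show "insert q V = (\<lambda>j. fst (conf p x j)) ` {..<Suc i}" by (rule img)
    qed
  qed
qed


fun walk :: "real \<Rightarrow> nat \<Rightarrow> nat \<Rightarrow> real" where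
  "walk a 0 h = 0"
| "walk a (Suc m) 0 = 1/2 + a/2 * walk a m 1"
| "walk a (Suc m) (Suc h) = a/2 * walk a m h + a/2 * walk a m (Suc (Suc h))"

lemma walk_nonneg: "0 \<le> a \<Longrightarrow> 0 \<le> walk a m h"
  by (induction a m h rule: walk.induct) auto

definition Bs :: "nat \<Rightarrow> (nat option \<times> bool \<times> dir) set" where
  "Bs n = insert None (Some ` {0..<n}) \<times> (UNIV :: bool set) \<times> (UNIV :: dir set)"

lemma UNIV_dir: "(UNIV :: dir set) = {L, R}"
  using dir.exhaust by auto

lemma finite_Bs: "finite (Bs n)"
  unfolding Bs_def by (auto simp: UNIV_dir)

lemma card_Bs: "card (Bs n) = 4 * (n + 1)"
proof -
  have "card (insert None (Some ` {0..<n})) = n + 1"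
    by (subst card_insert_disjoint) (auto simp: card_image)
  then show ?thesis unfolding Bs_def by (simp add: card_cartesian_product UNIV_dir)
qed

lemma programs_split:
  assumes "k \<in> {0..<n} \<times> (UNIV :: bool set)"
  shows "programs n = Pi\<^sub>E (insert k ({0..<n} \<times> UNIV - {k})) (\<lambda>_. Bs n)"
  unfolding programs_def Bs_def using assms by (simp add: insert_absorb)

lemma fin_K: "finite ({0..<(n::nat)} \<times> (UNIV :: bool set) - {k})"
  by (rule finite_Diff, rule finite_cartesian_product) auto


lemma main_bound:
  fixes n :: nat and a :: real
  assumes a0: "0 \<le> a"
  shows "finite V \<Longrightarrow> V \<subseteq> {0..<n} \<Longrightarrow> q < n \<Longrightarrow> q \<notin> V \<Longrightarrow>
    a * (real n + 1) \<le> real n - real (card V) - real m \<Longrightarrow>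
    walk a m h * real (card (programs n)) \<le> real (card {p \<in> programs n. good p m V (q,t,h)})"
proof (induction m arbitrary: V q t h)
  case 0 then show ?case by simp
next
  case (Suc m)
  define k where "k = (q, t h)"
  define A where "A = {0..<n} \<times> (UNIV :: bool set) - {k}"
  have kK: "k \<in> {0..<n} \<times> (UNIV :: bool set)" using Suc.prems k_def by auto
  have kA: "k \<notin> A" and finA: "finite A" using A_def fin_K by auto
  have PS: "programs n = Pi\<^sub>E (insert k A) (\<lambda>_. Bs n)"
    using programs_split[OF kK] A_def by simp
  define M where "M = card (Pi\<^sub>E A (\<lambda>_. Bs n))"
  have NM: "card (programs n) = 4 * (n+1) * M"
    using card_indep[OF finA kA finite_Bs, of "\<lambda>_. True"] PS M_def card_Bs by simp
  define W where "W = {0..<n} - insert q V"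
  have cardW: "real (card W) = real n - real (card V) - 1"
  proof -
    have "card W = n - card (insert q V)" unfolding W_def
      using Suc.prems by (subst card_Diff_subset) auto
    moreover have "card (insert q V) = Suc (card V)" using Suc.prems by simp
    moreover have "card (insert q V) \<le> n" using Suc.prems
      by (metis card_atLeastLessThan card_mono finite_atLeastLessThan insert_subset atLeastLessThan_iff le0 diff_zero)
    ultimately show ?thesis by simp
  qed
  have aW: "a * (real n + 1) \<le> real (card W)" using Suc.prems(5) cardW by simp
  define c :: "nat option \<times> bool \<times> dir \<Rightarrow> real" where
    "c = (\<lambda>(r,j,d). if h = 0 \<and> d = L then 1 else if r \<in> Some ` W then
          walk a m (if d = R then Suc h else h - 1) else 0)"
  have cnt: "real M * c b \<le> real (card {g \<in> Pi\<^sub>E A (\<lambda>_. Bs n). good (g(k:=b)) (Suc m) V (q,t,h)})"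
    if bB: "b \<in> Bs n" for b
  proof -
    obtain r j d where b: "b = (r,j,d)" by (cases b) auto
    define h' where "h' = (if d = R then Suc h else h - 1)"
    have gk: "\<And>g. good (g(k:=b)) (Suc m) V (q,t,h) = ((h = 0 \<and> d = L) \<or>
        (r \<noteq> None \<and> the r \<notin> insert q V \<and> good (g(k:=b)) m (insert q V) (the r, t(h:=j), h')))"
      by (simp add: k_def b h'_def)
    show ?thesis
    proof (cases "h = 0 \<and> d = L")
      case True
      then have "{g \<in> Pi\<^sub>E A (\<lambda>_. Bs n). good (g(k:=b)) (Suc m) V (q,t,h)} = Pi\<^sub>E A (\<lambda>_. Bs n)"
        using gk by auto
      then show ?thesis using True by (simp add: c_def b M_def)
    next
      case False
      show ?thesis
      proof (cases "r \<in> Some ` W")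
        case rW: True
        then obtain r' where r': "r = Some r'" "r' \<in> W" by auto
        have dep: "\<And>g. good (g(k:=b)) m (insert q V) (r', t(h:=j), h') = good g m (insert q V) (r', t(h:=j), h')"
          by (rule good_dep) (use r' W_def k_def in auto)
        define G where "G = card {g \<in> Pi\<^sub>E A (\<lambda>_. Bs n). good g m (insert q V) (r', t(h:=j), h')}"
        have eqS: "{g \<in> Pi\<^sub>E A (\<lambda>_. Bs n). good (g(k:=b)) (Suc m) V (q,t,h)}
            = {g \<in> Pi\<^sub>E A (\<lambda>_. Bs n). good g m (insert q V) (r', t(h:=j), h')}"
          using gk False r' dep W_def by auto
        have eqC: "card {p \<in> programs n. good p m (insert q V) (r', t(h:=j), h')}
            = 4 * (n+1) * G"
          unfolding PS card_Bs[symmetric] G_def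
        proof (rule card_indep[OF finA kA finite_Bs])
          fix f :: program and b'
          show "good (f(k:=b')) m (insert q V) (r', t(h:=j), h') = good f m (insert q V) (r', t(h:=j), h')"
            by (rule good_dep) (use r' W_def k_def in auto)
        qed
        have ih: "walk a m h' * real (card (programs n)) \<le>
            real (card {p \<in> programs n. good p m (insert q V) (r', t(h:=j), h')})"
          by (rule Suc.IH) (use Suc.prems r' W_def in auto)
        have cb: "c b = walk a m h'" using False rW by (auto simp: c_def b h'_def)
        have "real (4 * (n+1)) * (real M * walk a m h') \<le> real (4 * (n+1)) * real G"
          using ih unfolding eqC NM by (simp only: of_nat_mult) (simp add: algebra_simps)
        then have "real M * walk a m h' \<le> real G"
          by (rule mult_left_le_imp_le) simp
        then show ?thesis unfolding eqS cb G_def .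
      next
        case False2: False
        have "c b = 0" using False False2 by (auto simp: c_def b)
        then show ?thesis by simp
      qed
    qed
  qed
  have sumc: "(\<Sum>b\<in>Bs n. c b) = 2 * ((if h = 0 then real n + 1 else real (card W) * walk a m (h - 1))
       + real (card W) * walk a m (Suc h))"
  proof -
    have "(\<Sum>b\<in>Bs n. c b) = (\<Sum>r\<in>insert None (Some ` {0..<n}). \<Sum>j\<in>(UNIV::bool set). \<Sum>d\<in>(UNIV :: dir set). c (r,j,d))"
      unfolding Bs_def by (simp add: sum.cartesian_product)
    also have "\<dots> = (\<Sum>r\<in>insert None (Some ` {0..<n}). 2 * ((if h = 0 then 1 else (if r \<in> Some ` W then walk a m (h - 1) else 0))
        + (if r \<in> Some ` W then walk a m (Suc h) else 0)))"
      by (intro sum.cong refl) (auto simp: UNIV_dir c_def)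
    also have "\<dots> = 2 * ((if h = 0 then real n + 1 else real (card W) * walk a m (h - 1))
       + real (card W) * walk a m (Suc h))"
    proof -
      have sub: "Some ` W \<subseteq> insert None (Some ` {0..<n})" using W_def by auto
      have fin: "finite (insert None (Some ` {0..<n}))" by simp
      have ci: "card (insert None (Some ` {0..<n})) = n + 1"
        by (subst card_insert_disjoint) (auto simp: card_image)
      have s1: "(\<Sum>r\<in>insert None (Some ` {0..<n}). (if r \<in> Some ` W then w else 0)) = real (card W) * w" for w
      proof -
        have "(\<Sum>r\<in>insert None (Some ` {0..<n}). (if r \<in> Some ` W then w else 0))
            = (\<Sum>r\<in>insert None (Some ` {0..<n}) \<inter> Some ` W. w)"
          by (rule sum.inter_restrict[OF fin, symmetric])
        also have "insert None (Some ` {0..<n}) \<inter> Some ` W = Some ` W" using sub by blast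
        finally show ?thesis by (simp add: card_image)
      qed
      have gen: "\<And>RS :: nat option set. (\<And>w. (\<Sum>r\<in>RS. (if r \<in> Some ` W then w else 0)) = real (card W) * w)
          \<Longrightarrow> card RS = n + 1 \<Longrightarrow>
          (\<Sum>r\<in>RS. 2 * ((if h = 0 then 1 else (if r \<in> Some ` W then walk a m (h - 1) else 0))
        + (if r \<in> Some ` W then walk a m (Suc h) else 0))) = 2 * ((if h = 0 then real n + 1 else real (card W) * walk a m (h - 1))
       + real (card W) * walk a m (Suc h))"
        by (simp add: sum.distrib sum_distrib_left[symmetric])
      show ?thesis by (rule gen[OF s1 ci])
    qed
    finally show ?thesis .
  qed
  have "real M * (\<Sum>b\<in>Bs n. c b) \<le> (\<Sum>b\<in>Bs n. real (card {g \<in> Pi\<^sub>E A (\<lambda>_. Bs n). good (g(k:=b)) (Suc m) V (q,t,h)}))"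
    unfolding sum_distrib_left by (intro sum_mono cnt)
  also have "\<dots> = real (card {p \<in> programs n. good p (Suc m) V (q,t,h)})"
    unfolding PS by (subst card_split[OF finA kA finite_Bs]) simp
  finally have low: "real M * (\<Sum>b\<in>Bs n. c b) \<le> real (card {p \<in> programs n. good p (Suc m) V (q,t,h)})" .
  have w0: "0 \<le> walk a m i" for i using walk_nonneg[OF a0] .
  have key: "walk a (Suc m) h * (4 * (real n + 1)) \<le> (\<Sum>b\<in>Bs n. c b)"
  proof (cases h)
    case 0
    have "a * (real n + 1) * walk a m 1 \<le> real (card W) * walk a m 1"
      using aW w0 by (intro mult_right_mono) auto
    then show ?thesis using 0 sumc w0 by (simp add: algebra_simps)
  next
    case (Suc h0)
    have "a * (real n + 1) * walk a m h0 \<le> real (card W) * walk a m h0"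
      using aW w0 by (intro mult_right_mono) auto
    moreover have "a * (real n + 1) * walk a m (Suc (Suc h0)) \<le> real (card W) * walk a m (Suc (Suc h0))"
      using aW w0 by (intro mult_right_mono) auto
    ultimately show ?thesis using Suc sumc w0 by (simp add: algebra_simps) argo
  qed
  have "walk a (Suc m) h * real (card (programs n)) = real M * (walk a (Suc m) h * (4 * (real n + 1)))"
    using NM by simp
  also have "\<dots> \<le> real M * (\<Sum>b\<in>Bs n. c b)" using key by (intro mult_left_mono) auto
  finally show ?case using low by linarith
qed


lemma walk_cmp:
  assumes "0 \<le> a" "a \<le> 1"
  shows "a ^ m * walk 1 m h \<le> walk a m h"
proof (induction m arbitrary: h)
  case 0 then show ?case by simp
next
  case (Suc m)
  have am: "a ^ m \<le> 1" "0 \<le> a ^ m" using assms by (auto intro: power_le_one)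
  have w1: "0 \<le> walk 1 m i" for i by (rule walk_nonneg) simp
  show ?case
  proof (cases h)
    case 0
    have "a * a ^ m \<le> 1" using am assms by (intro mult_le_one) auto
    then have "a * a ^ m * (1/2) \<le> 1/2" by simp
    moreover have "a/2 * (a ^ m * walk 1 m 1) \<le> a/2 * walk a m 1"
      using Suc.IH assms by (intro mult_left_mono) auto
    ultimately show ?thesis using 0 by (simp add: algebra_simps)
  next
    case (Suc h0)
    have "a/2 * (a ^ m * walk 1 m h0) \<le> a/2 * walk a m h0"
      using Suc.IH assms by (intro mult_left_mono) auto
    moreover have "a/2 * (a ^ m * walk 1 m (Suc (Suc h0))) \<le> a/2 * walk a m (Suc (Suc h0))"
      using Suc.IH assms by (intro mult_left_mono) auto
    ultimately show ?thesis using Suc by (simp add: algebra_simps)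
  qed
qed

lemma walk1_01: "0 \<le> walk 1 m h \<and> walk 1 m h \<le> 1"
proof (induction m arbitrary: h)
  case 0 then show ?case by simp
next
  case (Suc m)
  show ?case
  proof (cases h)
    case 0 then show ?thesis using Suc.IH[of 1] by auto
  next
    case (Suc h0) then show ?thesis using Suc.IH[of h0] Suc.IH[of "Suc (Suc h0)"] by auto
  qed
qed

lemma walk1_mono: "walk 1 m h \<le> walk 1 (Suc m) h"
proof (induction m arbitrary: h)
  case 0 then show ?case using walk1_01[of "Suc 0" h] by simp
next
  case (Suc m)
  show ?case
  proof (cases h)
    case 0
    have e1: "walk 1 (Suc m) 0 = 1/2 + 1/2 * walk 1 m 1" by (rule walk.simps(2))
    have e2: "walk 1 (Suc (Suc m)) 0 = 1/2 + 1/2 * walk 1 (Suc m) 1" by (rule walk.simps(2))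
    show ?thesis unfolding 0 e1 e2 using Suc.IH[of 1] by linarith
  next
    case (Suc h0)
    have e1: "walk 1 (Suc m) (Suc h0) = 1/2 * walk 1 m h0 + 1/2 * walk 1 m (Suc (Suc h0))" by (rule walk.simps(3))
    have e2: "walk 1 (Suc (Suc m)) (Suc h0) = 1/2 * walk 1 (Suc m) h0 + 1/2 * walk 1 (Suc m) (Suc (Suc h0))" by (rule walk.simps(3))
    show ?thesis unfolding Suc e1 e2 using Suc.IH[of h0] Suc.IH[of "Suc (Suc h0)"] by linarith
  qed
qed

lemma walk1_bounds: "0 \<le> walk 1 m h \<and> walk 1 m h \<le> 1 \<and> walk 1 m h \<le> walk 1 (Suc m) h"
  using walk1_01 walk1_mono by blast

lemma walk1_lim: "(\<lambda>m. walk 1 m 0) \<longlonglongrightarrow> 1"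
proof -
  have conv: "\<exists>L. (\<lambda>m. walk 1 m h) \<longlonglongrightarrow> L" for h
  proof -
    have "incseq (\<lambda>m. walk 1 m h)" using walk1_bounds by (intro incseq_SucI) auto
    moreover have "\<forall>i. walk 1 i h \<le> 1" using walk1_bounds by blast
    ultimately obtain L where "(\<lambda>m. walk 1 m h) \<longlonglongrightarrow> L" by (rule incseq_convergent)
    then show ?thesis by blast
  qed
  define g where "g h = lim (\<lambda>m. walk 1 m h)" for h
  have gl: "(\<lambda>m. walk 1 m h) \<longlonglongrightarrow> g h" for h
    using conv[of h] unfolding g_def by (metis limI)
  have gb: "0 \<le> g h \<and> g h \<le> 1" for h
    using LIMSEQ_le_const[OF gl[of h], of 0] LIMSEQ_le_const2[OF gl[of h], of 1] walk1_bounds by auto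
  have r0: "g 0 = 1/2 + g 1 / 2"
  proof -
    have "(\<lambda>m. walk 1 (Suc m) 0) \<longlonglongrightarrow> g 0" using gl LIMSEQ_Suc by blast
    moreover have "(\<lambda>m. walk 1 (Suc m) 0) \<longlonglongrightarrow> 1/2 + g 1 / 2"
      by (simp, auto intro!: tendsto_intros gl)
    ultimately show ?thesis using LIMSEQ_unique by blast
  qed
  have rS: "g (Suc h) = g h / 2 + g (Suc (Suc h)) / 2" for h
  proof -
    have "(\<lambda>m. walk 1 (Suc m) (Suc h)) \<longlonglongrightarrow> g (Suc h)" using gl LIMSEQ_Suc by blast
    moreover have "(\<lambda>m. walk 1 (Suc m) (Suc h)) \<longlonglongrightarrow> g h / 2 + g (Suc (Suc h)) / 2"
      by (simp, auto intro!: tendsto_intros gl)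
    ultimately show ?thesis using LIMSEQ_unique by blast
  qed
  define d where "d = g 0 - 1"
  have lin: "g h = 1 + (real h + 1) * d \<and> g (Suc h) = 1 + (real h + 2) * d" for h
  proof (induction h)
    case 0 then show ?case using r0 d_def by simp
  next
    case (Suc h)
    have A: "g (Suc h) = 1 + (real h + 2) * d" and A0: "g h = 1 + (real h + 1) * d" using Suc.IH by auto
    have B: "g (Suc (Suc h)) = 2 * g (Suc h) - g h" using rS[of h] by simp
    show ?case unfolding B A A0 by (simp add: algebra_simps)
  qed
  have "d \<ge> 0"
  proof (rule ccontr)
    assume "\<not> d \<ge> 0"
    then have dn: "d < 0" by simp
    obtain h :: nat where "real h > -1 / d" using reals_Archimedean2 by blast
    then have "real h * (-d) > 1" using dn by (simp add: field_simps)
    then have "g h < 0" using lin[of h] dn by (simp add: algebra_simps)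
    then show False using gb[of h] by simp
  qed
  moreover have "d \<le> 0" using gb[of 0] d_def by simp
  ultimately have "g 0 = 1" using d_def by simp
  then show ?thesis using gl[of 0] by simp
qed


lemma ratio_lower:
  assumes "m < n"
  shows "((real n - real m) / (real n + 1)) ^ m * walk 1 m 0
     \<le> real (card {p \<in> programs n. falls_off_before_halt_or_repeat p x}) / real (card (programs n))"
proof -
  define a where "a = (real n - real m) / (real n + 1)"
  have a0: "0 \<le> a" and a1: "a \<le> 1" using assms by (auto simp: a_def field_simps)
  have fin: "finite (programs n)" unfolding programs_def
    by (intro finite_PiE) (auto simp: UNIV_dir)
  have Npos: "0 < card (programs n)"
  proof -
    have "programs n \<noteq> {}" unfolding programs_def by (simp add: PiE_eq_empty_iff)
    then show ?thesis using fin by (simp add: card_gt_0_iff)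
  qed
  have "walk a m 0 * real (card (programs n)) \<le> real (card {p \<in> programs n. good p m {} (0,x,0)})"
    by (rule main_bound[OF a0]) (use assms in \<open>auto simp: a_def\<close>)
  also have "\<dots> \<le> real (card {p \<in> programs n. falls_off_before_halt_or_repeat p x})"
  proof -
    have "{p \<in> programs n. good p m {} (0,x,0)} \<subseteq> {p \<in> programs n. falls_off_before_halt_or_repeat p x}"
    proof safe
      fix p assume "good p m {} (0,x,0)"
      then show "falls_off_before_halt_or_repeat p x"
        by (intro good_imp[of p m "{}" x 0]) (auto simp: conf_def)
    qed
    then show ?thesis using fin by (intro of_nat_mono card_mono) auto
  qed
  finally have "walk a m 0 \<le> real (card {p \<in> programs n. falls_off_before_halt_or_repeat p x}) / real (card (programs n))"
    using Npos by (simp add: field_simps)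
  moreover have "a ^ m * walk 1 m 0 \<le> walk a m 0" by (rule walk_cmp[OF a0 a1])
  ultimately show ?thesis unfolding a_def by linarith
qed

theorem mainTheorem6:
  fixes x :: "nat \<Rightarrow> bool"
  shows "(\<lambda>n. real (card {p \<in> programs n. falls_off_before_halt_or_repeat p x})
               / real (card (programs n))) \<longlonglongrightarrow> 1"
proof (rule order_tendstoI)
  fix y :: real assume "y > 1"
  have "real (card {p \<in> programs n. falls_off_before_halt_or_repeat p x}) / real (card (programs n)) \<le> 1" for n
  proof -
    have fin: "finite (programs n)" unfolding programs_def
      by (intro finite_PiE) (auto simp: UNIV_dir)
    have "card {p \<in> programs n. falls_off_before_halt_or_repeat p x} \<le> card (programs n)"
      using fin by (intro card_mono) auto
    then show ?thesis by (cases "card (programs n) = 0") (auto simp: divide_le_eq_1)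
  qed
  then show "\<forall>\<^sub>F n in sequentially. real (card {p \<in> programs n. falls_off_before_halt_or_repeat p x})
               / real (card (programs n)) < y"
    using \<open>y > 1\<close> by (intro always_eventually allI) (auto intro: le_less_trans)
next
  fix y :: real assume "y < 1"
  then have "\<forall>\<^sub>F m in sequentially. y < walk 1 m 0" using walk1_lim order_tendstoD(1) by blast
  then obtain m where ym: "y < walk 1 m 0" by (meson eventually_sequentially order_refl)
  have e: "(real n - real m) / (real n + 1) = 1 - (real m + 1) * inverse (real (Suc n))" for n
    by (simp add: field_simps)
  have "(\<lambda>n. 1 - (real m + 1) * inverse (real (Suc n))) \<longlonglongrightarrow> 1 - (real m + 1) * 0"
    by (intro tendsto_intros LIMSEQ_inverse_real_of_nat)
  then have "(\<lambda>n. (real n - real m) / (real n + 1)) \<longlonglongrightarrow> 1" by (simp add: e)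
  then have "(\<lambda>n. ((real n - real m) / (real n + 1)) ^ m * walk 1 m 0) \<longlonglongrightarrow> 1 ^ m * walk 1 m 0"
    by (intro tendsto_intros)
  then have "\<forall>\<^sub>F n in sequentially. y < ((real n - real m) / (real n + 1)) ^ m * walk 1 m 0"
    using ym by (intro order_tendstoD(1)) auto
  moreover have "\<forall>\<^sub>F n in sequentially. m < n" by (rule eventually_gt_at_top)
  ultimately show "\<forall>\<^sub>F n in sequentially. y < real (card {p \<in> programs n. falls_off_before_halt_or_repeat p x})
               / real (card (programs n))"
    by eventually_elim (use ratio_lower in \<open>fastforce intro: less_le_trans\<close>)
qed

end
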